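(* Let $\mathcal V$ be a finite state space and consider a source continuous-time discrete diffusion (continuous-time Markov chain) whose learned reverse process has reverse-rate matrix $\widetilde R_t^\theta(\mathbf y', \mathbf y)$, so that for $s = t - \Delta t$ the source backward kernel satisfies $p_{s\mid t}(\mathbf y' \mid \mathbf y) = \delta_{\mathbf y', \mathbf y} + \widetilde R_t^\theta(\mathbf y', \mathbf y)\,\Delta t + \mathcal O(\Delta t^2)$. Let $r_\phi : \mathcal V \to (0,\infty)$ be the density-ratio guidance term (approximating $\mathbb E_{\mathbf x \sim p(\cdot \mid \mathbf y)}[q(\mathbf x)/p(\mathbf x)]$, where $p$ and $q$ are the source and target data distributions sharing the same forward process), and let the target backward kernel be $$q^{\psi}_{s\mid t}(\mathbf y' \mid \mathbf y) = \frac{p_{s\mid t}(\mathbf y' \mid \mathbf y)\, r_\phi(\mathbf y')}{\sum_{\tilde{\mathbf y} \in \mathcal V} p_{s\mid t}(\tilde{\mathbf y} \mid \mathbf y)\, r_\phi(\tilde{\mathbf y})}.$$ Then $q^{\psi}_{s\mid t}(\mathbf y' \mid \mathbf y) = \delta_{\mathbf y', \mathbf y} + \widetilde R_t^\psi(\mathbf y', \mathbf y)\,\Delta t + \mathcal O(\Delta t^2)$, i.e. sampling from the target distribution is governed by the target reverse-rate matrix $$\widetilde R_t^{\psi}(\mathbf y', \mathbf y) = \begin{cases} \dfrac{r_\phi(\mathbf y')}{r_\phi(\mathbf y)}\,\widetilde R_t^\theta(\mathbf y', \mathbf y), & \mathbf y' \neq \mathbf y,\\[8pt] -\displaystyle\sum_{\tilde{\mathbf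 y} \neq \mathbf y} \dfrac{r_\phi(\tilde{\mathbf y})}{r_\phi(\mathbf y)}\,\widetilde R_t^\theta(\tilde{\mathbf y}, \mathbf y), & \mathbf y' = \mathbf y.\end{cases}$$
   Context: In the continuous-time framework, $t \in [0,T]$ is continuous, $p_{s\mid t}(\mathbf y' \mid \mathbf y) := p(\mathbf z_s = \mathbf y' \mid \mathbf z_t = \mathbf y)$ is the backward kernel, $\delta_{\mathbf y', \mathbf y}$ is the Kronecker delta, and $\mathcal O(\Delta t^2)$ denotes terms of order $\Delta t^2$ or higher as $\Delta t \to 0$. A reverse-rate matrix has nonnegative off-diagonal entries and columns summing to zero. The form of $q^{\psi}_{s\mid t}$ is the optimal target reverse kernel from ratio-based transfer: the reweighting of the source backward kernel by the ratio $r_\phi$ of the next state. *)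

theory Defs
  imports Complex_Main "HOL-Library.Landau_Symbols"
begin

text \<open>Matrices/kernels over a finite state space 'v are functions 'v => 'v => real,
  indexed as K y' y (target state y' first, current state y second), so that
  columns (fixed y) sum over y'.\<close>

definition is_rate_matrix :: "('v::finite \<Rightarrow> 'v \<Rightarrow> real) \<Rightarrow> bool" where
  "is_rate_matrix R \<longleftrightarrow> (\<forall>y' y. y' \<noteq> y \<longrightarrow> 0 \<le> R y' y) \<and> (\<forall>y. (\<Sum>y'\<in>UNIV. R y' y) = 0)"

definition is_kernel :: "('v::finite \<Rightarrow> 'v \<Rightarrow> real) \<Rightarrow> bool" where
  "is_kernel K \<longleftrightarrow> (\<forall>y' y. 0 \<le> K y' y) \<and> (\<forall>y. (\<Sum>y'\<in>UNIV. K y' y) = 1)"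

definition kron :: "'v \<Rightarrow> 'v \<Rightarrow> real" where
  "kron y' y = (if y' = y then 1 else 0)"

definition target_kernel :: "('v::finite \<Rightarrow> 'v \<Rightarrow> real) \<Rightarrow> ('v \<Rightarrow> real) \<Rightarrow> 'v \<Rightarrow> 'v \<Rightarrow> real" where
  "target_kernel P r y' y = P y' y * r y' / (\<Sum>y2\<in>UNIV. P y2 y * r y2)"

definition target_rate :: "('v::finite \<Rightarrow> 'v \<Rightarrow> real) \<Rightarrow> ('v \<Rightarrow> real) \<Rightarrow> 'v \<Rightarrow> 'v \<Rightarrow> real" where
  "target_rate R r y' y =
     (if y' \<noteq> y then r y' / r y * R y' y
      else - (\<Sum>y2\<in>UNIV - {y}. r y2 / r y * R y2 y))"

end

theory Submission
  imports Defs
begin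

lemma bigo_tendsto0:
  fixes f :: "real \<Rightarrow> real"
  assumes "f \<in> O[at_right 0](\<lambda>h. h ^ 2)"
  shows "(f \<longlongrightarrow> 0) (at_right 0)"
proof -
  from assms obtain c where c: "c > 0" "eventually (\<lambda>x. norm (f x) \<le> c * norm (x ^ 2)) (at_right (0::real))"
    by (elim landau_o.bigE)
  have "((\<lambda>x::real. c * norm (x ^ 2)) \<longlongrightarrow> c * norm ((0::real) ^ 2)) (at_right 0)"
    by (intro tendsto_intros)
  hence t: "((\<lambda>x::real. c * norm (x ^ 2)) \<longlongrightarrow> 0) (at_right 0)" by simp
  show ?thesis
    by (rule metric_tendsto_imp_tendsto[OF t]) (use c(2) in \<open>auto elim!: eventually_mono simp: dist_real_def\<close>)
qed

lemma ident:
  fixes k ry c a e E h er :: real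
  shows "k * ry + h * (ry * c + k * a) + er - (ry + h * a + e) * (k + h * c)
    = er - h^2 * (a * c) - e * k - h * e * c"
  by (simp add: algebra_simps power2_eq_square)

theorem theorem3:
  fixes R :: "'v::finite \<Rightarrow> 'v \<Rightarrow> real"
    and P :: "real \<Rightarrow> 'v \<Rightarrow> 'v \<Rightarrow> real"
    and r :: "'v \<Rightarrow> real"
  assumes rate: "is_rate_matrix R"
    and kernel: "eventually (\<lambda>h. is_kernel (P h)) (at_right 0)"
    and expand: "\<And>y' y. (\<lambda>h. P h y' y - kron y' y - R y' y * h) \<in> O[at_right 0](\<lambda>h. h ^ 2)"
    and rpos: "\<And>y. r y > 0"
  shows "\<And>y' y. (\<lambda>h. target_kernel (P h) r y' y - kron y' y - target_rate R r y' y * h)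
                    \<in> O[at_right 0](\<lambda>h. h ^ 2)"
proof -
  fix y' y
  define E where "E = (\<lambda>y2 h. P h y2 y - kron y2 y - R y2 y * h)"
  define a where "a = (\<Sum>y2\<in>UNIV. R y2 y * r y2)"
  define eD where "eD = (\<lambda>h. \<Sum>y2\<in>UNIV. E y2 h * r y2)"
  define D where "D = (\<lambda>h. \<Sum>y2\<in>UNIV. P h y2 y * r y2)"
  define c where "c = target_rate R r y' y"
  have EO: "E y2 \<in> O[at_right 0](\<lambda>h. h ^ 2)" for y2
    unfolding E_def by (rule expand)
  have eDO: "eD \<in> O[at_right 0](\<lambda>h. h ^ 2)"
    unfolding eD_def by (intro big_sum_in_bigo) (simp add: EO)
  have kronsum: "(\<Sum>y2\<in>UNIV. kron y2 y * r y2) = r y"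
  proof -
    have "(\<Sum>y2\<in>UNIV. kron y2 y * r y2) = (\<Sum>y2\<in>UNIV. if y2 = y then r y else 0)"
      by (intro sum.cong) (auto simp: kron_def)
    thus ?thesis by simp
  qed
  have Dexp: "D h = r y + h * a + eD h" for h
  proof -
    have "D h = (\<Sum>y2\<in>UNIV. kron y2 y * r y2 + h * (R y2 y * r y2) + E y2 h * r y2)"
      unfolding D_def E_def by (intro sum.cong) (auto simp: algebra_simps)
    also have "\<dots> = r y + h * a + eD h"
      by (simp add: sum.distrib kronsum a_def eD_def sum_distrib_left)
    finally show ?thesis .
  qed
  have Rsum: "(\<Sum>y2\<in>UNIV. R y2 y) = 0" using rate by (simp add: is_rate_matrix_def)
  have cexp: "r y * c = R y' y * r y' - kron y' y * a"
  proof (cases "y' = y")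
    case False thus ?thesis using rpos[of y] by (simp add: c_def target_rate_def kron_def)
  next
    case True
    have "a = R y y * r y + (\<Sum>y2\<in>UNIV - {y}. R y2 y * r y2)"
      unfolding a_def by (simp add: sum.remove[of UNIV y])
    moreover have "(\<Sum>y2\<in>UNIV - {y}. r y2 / r y * R y2 y) = (\<Sum>y2\<in>UNIV - {y}. R y2 y * r y2) / r y"
      by (simp add: sum_divide_distrib mult.commute)
    ultimately show ?thesis using True rpos[of y] by (simp add: c_def target_rate_def kron_def)
  qed
  have eD0: "(eD \<longlongrightarrow> 0) (at_right 0)" by (rule bigo_tendsto0[OF eDO])
  have "((\<lambda>h. r y + h * a + eD h) \<longlongrightarrow> r y + 0 * a + 0) (at_right 0)"
    by (intro tendsto_intros eD0)
  hence "(D \<longlongrightarrow> r y) (at_right 0)" using Dexp by (simp add: fun_eq_iff[symmetric] Dexp[abs_def])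
  hence evD: "eventually (\<lambda>h. D h > r y / 2) (at_right 0)"
    using rpos[of y] by (intro order_tendstoD) auto
  have invD: "(\<lambda>h. 1 / D h) \<in> O[at_right 0](\<lambda>_. 1)"
  proof (rule bigoI[where c = "2 / r y"])
    show "eventually (\<lambda>h. norm (1 / D h) \<le> 2 / r y * norm (1::real)) (at_right 0)"
      using evD
    proof eventually_elim
      case (elim h)
      have "0 < r y" by (rule rpos)
      with elim have "D h > 0" by linarith
      with elim \<open>0 < r y\<close> show ?case by (simp add: field_simps)
    qed
  qed
  define Num where "Num = (\<lambda>h. E y' h * r y' - h^2 * (a * c) - eD h * kron y' y - h * eD h * c)"
  have hbound: "(\<lambda>h::real. h) \<in> O[at_right 0](\<lambda>_. 1)"
    by (rule bigoI_tendsto[where c = 0]) (auto intro!: tendsto_eq_intros)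
  have "(\<lambda>h. h * eD h * c) \<in> O[at_right 0](\<lambda>h. 1 * h^2 * 1)"
    by (intro landau_o.big.mult hbound eDO) simp
  hence t4: "(\<lambda>h. h * eD h * c) \<in> O[at_right 0](\<lambda>h. h^2)" by simp
  have NumO: "Num \<in> O[at_right 0](\<lambda>h. h ^ 2)"
    unfolding Num_def
    by (intro sum_in_bigo t4 landau_o.big.mult_right landau_o.big.mult_left EO eDO) (auto simp: EO eDO)
  have "(\<lambda>h. Num h * (1 / D h)) \<in> O[at_right 0](\<lambda>h. h ^ 2)"
    by (rule landau_o.big_1_mult[OF NumO invD])
  moreover have Ev: "eventually (\<lambda>h. Num h * (1 / D h) = target_kernel (P h) r y' y - kron y' y - target_rate R r y' y * h) (at_right 0)"
    using evD
  proof eventually_elim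
    case (elim h)
    have "0 < r y" by (rule rpos)
    with elim have Dp: "D h \<noteq> 0" by linarith
    have num: "P h y' y * r y' = kron y' y * r y' + h * (R y' y * r y') + E y' h * r y'"
      by (simp add: E_def algebra_simps)
    have cx: "R y' y * r y' = r y * c + kron y' y * a" using cexp by simp
    have kr: "kron y' y * r y' = kron y' y * r y" by (simp add: kron_def)
    have "P h y' y * r y' - D h * (kron y' y + h * c) = kron y' y * r y + h * (r y * c + kron y' y * a) + E y' h * r y' - (r y + h * a + eD h) * (kron y' y + h * c)"
      by (subst num, subst cx, subst kr, subst Dexp, rule refl)
    also have "\<dots> = Num h" unfolding Num_def by (rule ident)
    finally have "P h y' y * r y' - D h * (kron y' y + h * c) = Num h" .
    hence "Num h / D h = (P h y' y * r y' - D h * (kron y' y + h * c)) / D h" by simp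
    also have "\<dots> = P h y' y * r y' / D h - (kron y' y + h * c)"
      using Dp by (simp add: diff_divide_distrib)
    finally have "Num h / D h = P h y' y * r y' / D h - kron y' y - c * h" by (simp add: mult.commute)
    thus ?case by (simp add: target_kernel_def D_def c_def)
  qed
  ultimately show "(\<lambda>h. target_kernel (P h) r y' y - kron y' y - target_rate R r y' y * h)
                    \<in> O[at_right 0](\<lambda>h. h ^ 2)"
    using landau_o.big.in_cong[OF Ev] by blast
qed

end
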